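(* Let $\mathcal H$ be an obstruction design of type $\lambda\vdash_n d$. Then $f_{\mathcal H}(w)=0$ for every tensor $w\in\bigotimes^3\mathbb C^n$ whose border rank satisfies $\underline R(w)<\chi'(\mathcal H)$.
   Context: Notation: $[d]=\{1,\dots,d\}$. A partition $\lambda$ is a finite nonincreasing sequence of natural numbers; $|\lambda|=\sum_i\lambda_i$, $\ell(\lambda)$ is the number of nonzero parts, and $\lambda^t$ is the transposed partition. For a triple $\lambda=(\lambda^{(1)},\lambda^{(2)},\lambda^{(3)})$ of partitions, $\lambda\vdash_n d$ means $|\lambda^{(k)}|=d$ and $\ell(\lambda^{(k)})\le n$ for $k=1,2,3$. An obstruction design is a finite subset $\mathcal H\subseteq[\ell_1]\times[\ell_2]\times[\ell_3]$. For $k\in\{1,2,3\}$ the $k$-slices of $\mathcal H$ are the nonempty sets $\{x\in\mathcal H:x_k=i\}$, $i\in[\ell_k]$; they form a set partition $E^{(k)}$ of $\mathcal H$. If $\mu^{(k)}$ is the partition obtained by sorting the slice sizes nonincreasingly, the type of $\mathcal H$ is $(\lambda^{(1)},\lambda^{(2)},\lambda^{(3)})$ with $\lambda^{(k)}=(\mu^{(k)})^t$. Definition of $f_{\mathcal H}$: for a finite totally ordered set $S$, a map $J:S\to\mathbb C^n$ and $e\subseteq S$ with $|e|\le n$, $\det J|_e$ is the determinant of the $|e|\times|e|$ matrix whose columns are the vectors $J(s)$, $s\in e$, in increasing order, truncated to their first $|e|$ coordinates. For an obstruction design $\mathcal H$ of type $\lambda\vdash_n d$ with a fixed total order, and a triple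 labeling $J=(J^{(1)},J^{(2)},J^{(3)}):\mathcal H\to(\mathbb C^n)^3$, set $\mathrm{eval}_{\mathcal H}(J)=\prod_{k=1}^3\prod_{e\in E^{(k)}}\det J^{(k)}|_e$. For $w=\sum_{i=1}^r u^{(1)}_i\otimes u^{(2)}_i\otimes u^{(3)}_i\in\bigotimes^3\mathbb C^n$ define $f_{\mathcal H}(w)=\sum_{I:\mathcal H\to[r]}\mathrm{eval}_{\mathcal H}(J_I)$ where $J_I^{(k)}(s)=u^{(k)}_{I(s)}$; this is a well-defined homogeneous polynomial of degree $d$ on $\bigotimes^3\mathbb C^n$. The rank $R(w)$ of $w\in\bigotimes^3\mathbb C^n$ is the least $r$ such that $w$ is a sum of $r$ tensors $u\otimes v\otimes x$; the border rank $\underline R(w)$ is the least $r$ such that $w$ is a limit of tensors of rank at most $r$. A proper coloring of $\mathcal H$ with $c$ colors is a map $\sigma:\mathcal H\to[c]$ that is injective on every slice (of each of the three directions); the chromatic index $\chi'(\mathcal H)$ is the least $c$ admitting a proper coloring. *)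

theory Defs
  imports Complex_Main "HOL-Library.Multiset" "Jordan_Normal_Form.Determinant"
begin

text \<open>Vectors in C^n are functions nat => complex (coordinates 0..n-1 are
the relevant ones); tensors in C^n (x) C^n (x) C^n are functions nat => nat => nat => complex,
only entries with all indices < n being relevant. A total order on the design H is given by a map rk injective on H
(s < t iff rk s < rk t).\<close>

type_synonym point = "nat \<times> nat \<times> nat"
type_synonym cvec = "nat \<Rightarrow> complex"
type_synonym tensor3 = "nat \<Rightarrow> nat \<Rightarrow> nat \<Rightarrow> complex"

definition part_size :: "nat list \<Rightarrow> nat" where
  "part_size la = sum_list la"

definition part_length :: "nat list \<Rightarrow> nat" where
  "part_length la = length (filter (\<lambda>x. x \<noteq> 0) la)"

definition part_transpose :: "nat list \<Rightarrow> nat list" where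
  "part_transpose la = map (\<lambda>j. length (filter (\<lambda>x. j \<le> x) la)) [1..<Suc (Max (set (0 # la)))]"

definition vdash_n :: "nat \<Rightarrow> nat \<Rightarrow> nat list \<times> nat list \<times> nat list \<Rightarrow> bool" where
  "vdash_n n d la \<longleftrightarrow>
     (\<forall>p \<in> {fst la, fst (snd la), snd (snd la)}. part_size p = d \<and> part_length p \<le> n)"

definition coord :: "nat \<Rightarrow> point \<Rightarrow> nat" where
  "coord k x = (if k = 1 then fst x else if k = 2 then fst (snd x) else snd (snd x))"

definition slices :: "nat \<Rightarrow> point set \<Rightarrow> point set set" where
  "slices k H = {{x \<in> H. coord k x = i} | i. \<exists>x \<in> H. coord k x = i}"

definition slice_partition :: "nat \<Rightarrow> point set \<Rightarrow> nat list" where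
  "slice_partition k H = rev (sorted_list_of_multiset (image_mset card (mset_set (slices k H))))"

definition design_type :: "point set \<Rightarrow> nat list \<times> nat list \<times> nat list" where
  "design_type H = (part_transpose (slice_partition 1 H),
                    part_transpose (slice_partition 2 H),
                    part_transpose (slice_partition 3 H))"

definition proper_coloring :: "point set \<Rightarrow> nat \<Rightarrow> (point \<Rightarrow> nat) \<Rightarrow> bool" where
  "proper_coloring H c \<sigma> \<longleftrightarrow> (\<forall>x \<in> H. \<sigma> x \<in> {1..c}) \<and>
     (\<forall>k \<in> {1,2,3}. \<forall>e \<in> slices k H. inj_on \<sigma> e)"

definition chromatic_index :: "point set \<Rightarrow> nat" where
  "chromatic_index H = (LEAST c. \<exists>\<sigma>. proper_coloring H c \<sigma>)"

definition is_decomp :: "nat \<Rightarrow> tensor3 \<Rightarrow> nat \<Rightarrow> (nat \<Rightarrow> cvec) \<Rightarrow> (nat \<Rightarrow> cvec) \<Rightarrow> (nat \<Rightarrow> cvec) \<Rightarrow> bool" where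
  "is_decomp n w r u v x \<longleftrightarrow>
     (\<forall>i<n. \<forall>j<n. \<forall>k<n. w i j k = (\<Sum>l<r. u l i * v l j * x l k))"

definition tensor_rank :: "nat \<Rightarrow> tensor3 \<Rightarrow> nat" where
  "tensor_rank n w = (LEAST r. \<exists>u v x. is_decomp n w r u v x)"

definition border_rank :: "nat \<Rightarrow> tensor3 \<Rightarrow> nat" where
  "border_rank n w = (LEAST r. \<exists>T :: nat \<Rightarrow> tensor3.
      (\<forall>m. tensor_rank n (T m) \<le> r) \<and>
      (\<forall>i<n. \<forall>j<n. \<forall>k<n. (\<lambda>m. T m i j k) \<longlonglongrightarrow> w i j k))"

text \<open>the b-th element (0-based) of e in the order given by rk\<close>
definition nth_in_order :: "(point \<Rightarrow> nat) \<Rightarrow> point set \<Rightarrow> nat \<Rightarrow> point" where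
  "nth_in_order rk e b = inv_into e rk (sorted_list_of_set (rk ` e) ! b)"

definition det_restr :: "(point \<Rightarrow> nat) \<Rightarrow> (point \<Rightarrow> cvec) \<Rightarrow> point set \<Rightarrow> complex" where
  "det_restr rk J e = det (mat (card e) (card e) (\<lambda>(a, b). J (nth_in_order rk e b) a))"

definition eval_design :: "point set \<Rightarrow> (point \<Rightarrow> nat) \<Rightarrow>
    (point \<Rightarrow> cvec) \<Rightarrow> (point \<Rightarrow> cvec) \<Rightarrow> (point \<Rightarrow> cvec) \<Rightarrow> complex" where
  "eval_design H rk J1 J2 J3 =
     (\<Prod>e\<in>slices 1 H. det_restr rk J1 e) * (\<Prod>e\<in>slices 2 H. det_restr rk J2 e) *
     (\<Prod>e\<in>slices 3 H. det_restr rk J3 e)"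

definition fH_decomp :: "point set \<Rightarrow> (point \<Rightarrow> nat) \<Rightarrow> nat \<Rightarrow>
    (nat \<Rightarrow> cvec) \<Rightarrow> (nat \<Rightarrow> cvec) \<Rightarrow> (nat \<Rightarrow> cvec) \<Rightarrow> complex" where
  "fH_decomp H rk r u v x =
     (\<Sum>I \<in> PiE H (\<lambda>_. {..<r}).
        eval_design H rk (\<lambda>s. u (I s)) (\<lambda>s. v (I s)) (\<lambda>s. x (I s)))"

text \<open>f_H(w): evaluate on some decomposition of w (the value is independent of the
decomposition, as stated in the paper).\<close>
definition fH :: "nat \<Rightarrow> point set \<Rightarrow> (point \<Rightarrow> nat) \<Rightarrow> tensor3 \<Rightarrow> complex" where
  "fH n H rk w = (let (r, u, v, x) = (SOME (r, u, v, x). is_decomp n w r u v x)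
                  in fH_decomp H rk r u v x)"

end

theory Submission
  imports Defs "HOL-Library.FuncSet"
begin

lemma slices_finite: "finite H \<Longrightarrow> finite (slices k H)"
proof -
  assume f: "finite H"
  have "slices k H = (\<lambda>i. {x \<in> H. coord k x = i}) ` (coord k ` H)"
    unfolding slices_def by auto
  thus ?thesis using f by simp
qed

lemma slices_sub: "e \<in> slices k H \<Longrightarrow> e \<subseteq> H"
  unfolding slices_def by auto

lemma slices_Union: "\<Union>(slices k H) = H"
  unfolding slices_def by auto

lemma slices_disj: "e \<in> slices k H \<Longrightarrow> e' \<in> slices k H \<Longrightarrow> e \<noteq> e' \<Longrightarrow> e \<inter> e' = {}"
  unfolding slices_def by auto

lemma slices_of: "e \<in> slices k H \<Longrightarrow> s \<in> e \<Longrightarrow> e = {x \<in> H. coord k x = coord k s}"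
  unfolding slices_def by auto

lemma slices_mem: "s \<in> H \<Longrightarrow> {x \<in> H. coord k x = coord k s} \<in> slices k H"
  unfolding slices_def by auto

lemma nth_in_order_bij:
  assumes "finite e" "inj_on rk e"
  shows "bij_betw (nth_in_order rk e) {..<card e} e"
proof -
  let ?xs = "sorted_list_of_set (rk ` e)"
  have c: "length ?xs = card e" using assms by (simp add: card_image)
  have b1: "bij_betw ((!) ?xs) {..<card e} (rk ` e)"
    by (rule bij_betw_nth) (use assms c in auto)
  have b2: "bij_betw (inv_into e rk) (rk ` e) e"
    using assms by (simp add: bij_betw_inv_into inj_on_imp_bij_betw)
  have "bij_betw (inv_into e rk \<circ> (!) ?xs) {..<card e} e"
    using bij_betw_trans[OF b1 b2] .
  thus ?thesis unfolding nth_in_order_def comp_def by simp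
qed

lemma det_restr_zero:
  assumes "finite e" "inj_on rk e" "s \<in> e" "t \<in> e" "s \<noteq> t" "J s = J t"
  shows "det_restr rk J e = 0"
proof -
  let ?g = "nth_in_order rk e"
  have b: "bij_betw ?g {..<card e} e" by (rule nth_in_order_bij) fact+
  obtain i where i: "i < card e" "?g i = s" using b assms(3) unfolding bij_betw_def by (metis imageE lessThan_iff)
  obtain j where j: "j < card e" "?g j = t" using b assms(4) unfolding bij_betw_def by (metis imageE lessThan_iff)
  have "i \<noteq> j" using i j assms(5) by auto
  show ?thesis unfolding det_restr_def
    by (rule det_identical_columns[OF mat_carrier \<open>i \<noteq> j\<close> i(1) j(1)])
       (use i j assms(6) in auto)
qed

lemma fH_decomp_zero:
  assumes fin: "finite H" and inj: "inj_on rk H" and r: "r < chromatic_index H"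
  shows "fH_decomp H rk r u v x = 0"
  unfolding fH_decomp_def
proof (rule sum.neutral, rule ballI)
  fix I assume I: "I \<in> PiE H (\<lambda>_. {..<r})"
  have fs: "\<And>k. finite (slices k H)" using slices_finite[OF fin] .
  have key: "\<And>k J. k \<in> {1,2,3} \<Longrightarrow> e \<in> slices k H \<Longrightarrow> \<not> inj_on I e \<Longrightarrow>
     (\<Prod>e\<in>slices k H. det_restr rk (\<lambda>s. J (I s)) e) = 0" for e
  proof -
    fix k J assume e: "e \<in> slices k H" and ni: "\<not> inj_on I e"
    then obtain s t where st: "s \<in> e" "t \<in> e" "s \<noteq> t" "I s = I t" unfolding inj_on_def by blast
    have "finite e" "inj_on rk e" using slices_sub[OF e] fin inj
      by (auto intro: finite_subset inj_on_subset)
    hence "det_restr rk (\<lambda>s. J (I s)) e = 0"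
      by (rule det_restr_zero[OF _ _ st(1-3)]) (simp add: st(4))
    thus "(\<Prod>e\<in>slices k H. det_restr rk (\<lambda>s. J (I s)) e) = 0"
      using fs e by (auto intro: prod_zero)
  qed
  show "eval_design H rk (\<lambda>s. u (I s)) (\<lambda>s. v (I s)) (\<lambda>s. x (I s)) = 0"
  proof (cases "\<forall>k\<in>{1,2,3}. \<forall>e \<in> slices k H. inj_on I e")
    case True
    have "proper_coloring H r (\<lambda>s. I s + 1)"
      unfolding proper_coloring_def
    proof
      show "\<forall>xa\<in>H. I xa + 1 \<in> {1..r}" using I by (auto simp: PiE_def Pi_def Suc_le_eq)
      show "\<forall>k\<in>{1, 2, 3}. \<forall>e\<in>slices k H. inj_on (\<lambda>s. I s + 1) e"
        using True unfolding inj_on_def by auto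
    qed
    hence "chromatic_index H \<le> r" unfolding chromatic_index_def by (metis Least_le)
    thus ?thesis using r by simp
  next
    case False
    then obtain k e where "k \<in> {1,2,3}" "e \<in> slices k H" "\<not> inj_on I e" by auto
    thus ?thesis unfolding eval_design_def using key[of k e] by auto
  qed
qed

lemma part_transpose_bound:
  assumes "y \<in> set la" shows "y \<le> part_length (part_transpose la)"
proof -
  let ?M = "Max (set (0 # la))"
  have yM: "y \<le> ?M" using assms by simp
  have nz: "\<forall>z \<in> set (part_transpose la). z \<noteq> 0"
  proof
    fix z assume "z \<in> set (part_transpose la)"
    then obtain j where j0: "j \<in> set [1..<Suc ?M]" "z = length (filter (\<lambda>x. j \<le> x) la)"
      unfolding part_transpose_def set_map by blast
    hence j: "j \<in> {1..<Suc ?M}" "z = length (filter (\<lambda>x. j \<le> x) la)" by auto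
    have "?M \<in> set (0 # la)" by (rule Max_in) auto
    moreover have "?M \<noteq> 0" using j by auto
    ultimately have "?M \<in> set la" by auto
    hence "?M \<in> set (filter (\<lambda>x. j \<le> x) la)" using j by auto
    thus "z \<noteq> 0" using j by (metis length_0_conv empty_iff list.set(1))
  qed
  have "part_length (part_transpose la) = length (part_transpose la)"
    unfolding part_length_def using nz by (simp add: filter_id_conv)
  also have "\<dots> = ?M" unfolding part_transpose_def by simp
  finally show ?thesis using yM by simp
qed

lemma slice_card_le:
  assumes fin: "finite H" and vd: "vdash_n n d (design_type H)" and k: "k \<in> {1,2,3}"
    and e: "e \<in> slices k H"
  shows "card e \<le> n"
proof -
  have "card e \<in> set (slice_partition k H)"
    unfolding slice_partition_def using slices_finite[OF fin] e by simp
  hence "card e \<le> part_length (part_transpose (slice_partition k H))"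
    by (rule part_transpose_bound)
  moreover have "part_length (part_transpose (slice_partition k H)) \<le> n"
    using vd k unfolding vdash_n_def design_type_def by auto
  ultimately show ?thesis by simp
qed

definition idx :: "(point \<Rightarrow> nat) \<Rightarrow> point set \<Rightarrow> point \<Rightarrow> nat" where
  "idx rk e s = inv_into {..<card e} (nth_in_order rk e) s"

lemma idx_props:
  assumes "finite e" "inj_on rk e" "s \<in> e"
  shows "idx rk e s < card e" "nth_in_order rk e (idx rk e s) = s"
proof -
  have b: "bij_betw (nth_in_order rk e) {..<card e} e" by (rule nth_in_order_bij) fact+
  show "idx rk e s < card e" unfolding idx_def using b assms(3)
    by (metis bij_betw_def inv_into_into lessThan_iff)
  show "nth_in_order rk e (idx rk e s) = s" unfolding idx_def using b assms(3)
    by (metis bij_betw_def f_inv_into_f)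
qed

lemma det_restr_expand:
  assumes fe: "finite e" and inj: "inj_on rk e"
  shows "det_restr rk J e = (\<Sum>p\<in>{p. p permutes {0..<card e}}. signof p * (\<Prod>s\<in>e. J s (p (idx rk e s))))"
proof -
  let ?m = "card e" and ?g = "nth_in_order rk e"
  let ?A = "mat ?m ?m (\<lambda>(a, b). J (?g b) a)"
  have b: "bij_betw ?g {..<?m} e" by (rule nth_in_order_bij) fact+
  have "det_restr rk J e = det (transpose_mat ?A)"
    unfolding det_restr_def by (rule det_transpose[symmetric, OF mat_carrier])
  also have "\<dots> = (\<Sum>p\<in>{p. p permutes {0..<?m}}. signof p * (\<Prod>i=0..<?m. transpose_mat ?A $$ (i, p i)))"
    by (rule det_def') (simp add: transpose_carrier_mat)
  also have "\<dots> = (\<Sum>p\<in>{p. p permutes {0..<?m}}. signof p * (\<Prod>s\<in>e. J s (p (idx rk e s))))"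
  proof (rule sum.cong[OF refl])
    fix p assume "p \<in> {p. p permutes {0..<?m}}"
    hence p: "p permutes {0..<?m}" by simp
    have "(\<Prod>i=0..<?m. transpose_mat ?A $$ (i, p i)) = (\<Prod>i\<in>{..<?m}. J (?g i) (p i))"
      using p by (intro prod.cong) (auto simp: permutes_in_image)
    also have "\<dots> = (\<Prod>i\<in>{..<?m}. (\<lambda>s. J s (p (idx rk e s))) (?g i))"
    proof (rule prod.cong[OF refl])
      fix i assume i: "i \<in> {..<?m}"
      have "idx rk e (?g i) = i" unfolding idx_def using b i
        by (meson bij_betw_def inv_into_f_f)
      thus "J (?g i) (p i) = (\<lambda>s. J s (p (idx rk e s))) (?g i)" by simp
    qed
    also have "\<dots> = (\<Prod>s\<in>e. J s (p (idx rk e s)))"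
      by (rule prod.reindex_bij_betw[OF b])
    finally show "signof p * (\<Prod>i=0..<?m. transpose_mat ?A $$ (i, p i)) = signof p * (\<Prod>s\<in>e. J s (p (idx rk e s)))"
      by simp
  qed
  finally show ?thesis .
qed

lemma prod_slices_expand:
  assumes fin: "finite H" and inj: "inj_on rk H" and cn: "\<forall>e\<in>slices k H. card e \<le> n"
  shows "\<exists>(C :: (point set \<Rightarrow> nat \<Rightarrow> nat) set) (coef :: _ \<Rightarrow> complex) a. finite C \<and> (\<forall>q\<in>C. \<forall>s\<in>H. a q s < n) \<and>
     (\<forall>J. (\<Prod>e\<in>slices k H. det_restr rk J e) = (\<Sum>q\<in>C. coef q * (\<Prod>s\<in>H. J s (a q s))))"
proof -
  let ?E = "slices k H"
  let ?P = "\<lambda>e. {p. p permutes {0..<card e}}"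
  let ?F = "\<lambda>s. {x \<in> H. coord k x = coord k s}"
  define C where "C = PiE ?E ?P"
  define coef :: "(point set \<Rightarrow> nat \<Rightarrow> nat) \<Rightarrow> complex" where "coef q = (\<Prod>e\<in>?E. signof (q e))" for q
  define a :: "(point set \<Rightarrow> nat \<Rightarrow> nat) \<Rightarrow> point \<Rightarrow> nat" where "a q s = q (?F s) (idx rk (?F s) s)" for q s
  have fE: "finite ?E" by (rule slices_finite[OF fin])
  have fe: "finite e" if "e \<in> ?E" for e using fin slices_sub[OF that] by (rule finite_subset[rotated])
  have ie: "inj_on rk e" if "e \<in> ?E" for e using inj slices_sub[OF that] by (rule inj_on_subset)
  have fP: "\<And>e. finite (?P e)" by (simp add: finite_permutations)
  have "finite C" unfolding C_def using fE fP by (intro finite_PiE) auto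
  moreover have "\<forall>q\<in>C. \<forall>s\<in>H. a q s < n"
  proof (intro ballI)
    fix q s assume q: "q \<in> C" and s: "s \<in> H"
    have Fe: "?F s \<in> ?E" by (rule slices_mem[OF s])
    have sF: "s \<in> ?F s" using s by simp
    have "q (?F s) permutes {0..<card (?F s)}" using q Fe unfolding C_def by (auto simp: PiE_def Pi_def)
    moreover have "idx rk (?F s) s < card (?F s)" by (rule idx_props(1)[OF fe[OF Fe] ie[OF Fe] sF])
    ultimately have "a q s < card (?F s)" unfolding a_def by (simp add: permutes_in_image)
    thus "a q s < n" using cn[rule_format, OF Fe] by linarith
  qed
  moreover have "\<forall>J. (\<Prod>e\<in>?E. det_restr rk J e) = (\<Sum>q\<in>C. coef q * (\<Prod>s\<in>H. J s (a q s)))"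
  proof
    fix J :: "point \<Rightarrow> cvec"
    have "(\<Prod>e\<in>?E. det_restr rk J e) = (\<Prod>e\<in>?E. \<Sum>p\<in>?P e. signof p * (\<Prod>s\<in>e. J s (p (idx rk e s))))"
      by (rule prod.cong[OF refl]) (rule det_restr_expand[OF fe ie])
    also have "\<dots> = (\<Sum>q\<in>C. \<Prod>e\<in>?E. signof (q e) * (\<Prod>s\<in>e. J s (q e (idx rk e s))))"
      unfolding C_def by (rule prod_sum_PiE[OF fE fP])
    also have "\<dots> = (\<Sum>q\<in>C. coef q * (\<Prod>s\<in>H. J s (a q s)))"
    proof (rule sum.cong[OF refl])
      fix q assume "q \<in> C"
      have "(\<Prod>e\<in>?E. \<Prod>s\<in>e. J s (q e (idx rk e s))) = (\<Prod>e\<in>?E. \<Prod>s\<in>e. J s (a q s))"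
      proof (intro prod.cong refl)
        fix e s assume "e \<in> ?E" "s \<in> e"
        hence "?F s = e" using slices_of[of e k H s] by simp
        thus "J s (q e (idx rk e s)) = J s (a q s)" unfolding a_def by simp
      qed
      also have "\<dots> = (\<Prod>s\<in>\<Union>?E. J s (a q s))"
        by (subst prod.Union_disjoint) (use fe slices_disj[of _ k H] in auto)
      also have "\<dots> = (\<Prod>s\<in>H. J s (a q s))" by (simp add: slices_Union)
      finally show "(\<Prod>e\<in>?E. signof (q e) * (\<Prod>s\<in>e. J s (q e (idx rk e s)))) = coef q * (\<Prod>s\<in>H. J s (a q s))"
        unfolding coef_def prod.distrib by simp
    qed
    finally show "(\<Prod>e\<in>?E. det_restr rk J e) = (\<Sum>q\<in>C. coef q * (\<Prod>s\<in>H. J s (a q s)))" .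
  qed
  ultimately show ?thesis by blast
qed

lemma exists_decomp: "\<exists>r u v x. is_decomp n w r u v x"
proof (intro exI)
  show "is_decomp n w (n*n) (\<lambda>l i. if i = l div n then 1 else 0) (\<lambda>l j. if j = l mod n then 1 else 0)
      (\<lambda>l k. w (l div n) (l mod n) k)"
    unfolding is_decomp_def
  proof (intro allI impI)
    fix i j k assume i: "i < n" and j: "j < n" and k: "k < n"
    have eq: "(i = l div n \<and> j = l mod n) \<longleftrightarrow> l = i*n + j" for l
    proof
      assume "i = l div n \<and> j = l mod n" thus "l = i*n+j" by (metis div_mult_mod_eq)
    next
      assume "l = i*n+j" thus "i = l div n \<and> j = l mod n" using j by simp
    qed
    have lt: "i*n + j < n*n"
    proof -
      have "i*n + j < i*n + n" using j by simp
      also have "\<dots> = (i+1)*n" by simp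
      also have "\<dots> \<le> n*n" using i by (intro mult_right_mono) auto
      finally show ?thesis .
    qed
    have "(\<Sum>l<n*n. (if i = l div n then 1 else 0) * (if j = l mod n then 1 else 0) * w (l div n) (l mod n) k)
        = (\<Sum>l<n*n. if l = i*n+j then w i j k else 0)"
      by (rule sum.cong[OF refl]) (use eq in auto)
    also have "\<dots> = w i j k" using lt by simp
    finally show "w i j k = (\<Sum>l<n*n. (if i = l div n then 1 else 0) * (if j = l mod n then 1 else 0) * w (l div n) (l mod n) k)"
      by simp
  qed
qed

lemma sum3_prod:
  fixes A :: "'a \<Rightarrow> complex" and B :: "'b \<Rightarrow> complex" and C :: "'c \<Rightarrow> complex"
  shows "(\<Sum>q1\<in>C1. A q1) * (\<Sum>q2\<in>C2. B q2) * (\<Sum>q3\<in>C3. C q3) = (\<Sum>q1\<in>C1. \<Sum>q2\<in>C2. \<Sum>q3\<in>C3. A q1 * B q2 * C q3)"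
proof -
  have "(\<Sum>q1\<in>C1. A q1) * (\<Sum>q2\<in>C2. B q2) * (\<Sum>q3\<in>C3. C q3) = (\<Sum>q1\<in>C1. A q1 * (\<Sum>q2\<in>C2. B q2) * (\<Sum>q3\<in>C3. C q3))"
    by (simp only: sum_distrib_right)
  also have "\<dots> = (\<Sum>q1\<in>C1. \<Sum>q2\<in>C2. A q1 * B q2 * (\<Sum>q3\<in>C3. C q3))"
    by (intro sum.cong refl) (simp only: sum_distrib_left[where r="A _"] sum_distrib_right[where r="sum C C3"])
  also have "\<dots> = (\<Sum>q1\<in>C1. \<Sum>q2\<in>C2. \<Sum>q3\<in>C3. A q1 * B q2 * C q3)"
    by (intro sum.cong refl) (simp only: sum_distrib_left)
  finally show ?thesis .
qed

lemma fH_decomp_poly: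
  fixes C1 :: "'a set" and C2 :: "'b set" and C3 :: "'c set"
  assumes fin: "finite H"
   and f1: "finite C1" and f2: "finite C2" and f3: "finite C3"
   and b1: "\<forall>q\<in>C1. \<forall>s\<in>H. a1 q s < n" and b2: "\<forall>q\<in>C2. \<forall>s\<in>H. a2 q s < n"
   and b3: "\<forall>q\<in>C3. \<forall>s\<in>H. a3 q s < n"
   and e1: "\<forall>J. (\<Prod>e\<in>slices 1 H. det_restr rk J e) = (\<Sum>q\<in>C1. c1 q * (\<Prod>s\<in>H. J s (a1 q s)))"
   and e2: "\<forall>J. (\<Prod>e\<in>slices 2 H. det_restr rk J e) = (\<Sum>q\<in>C2. c2 q * (\<Prod>s\<in>H. J s (a2 q s)))"
   and e3: "\<forall>J. (\<Prod>e\<in>slices 3 H. det_restr rk J e) = (\<Sum>q\<in>C3. c3 q * (\<Prod>s\<in>H. J s (a3 q s)))"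
   and dec: "is_decomp n w r u v x"
  shows "fH_decomp H rk r u v x = (\<Sum>q1\<in>C1. \<Sum>q2\<in>C2. \<Sum>q3\<in>C3. c1 q1 * c2 q2 * c3 q3 *
            (\<Prod>s\<in>H. w (a1 q1 s) (a2 q2 s) (a3 q3 s)))"
proof -
  let ?PI = "PiE H (\<lambda>_. {..<r})"
  let ?F = "\<lambda>I q1 q2 q3. c1 q1 * c2 q2 * c3 q3 *
      (\<Prod>s\<in>H. u (I s) (a1 q1 s) * v (I s) (a2 q2 s) * x (I s) (a3 q3 s))"
  have "fH_decomp H rk r u v x = (\<Sum>I\<in>?PI. \<Sum>q1\<in>C1. \<Sum>q2\<in>C2. \<Sum>q3\<in>C3. ?F I q1 q2 q3)"
    unfolding fH_decomp_def
  proof (rule sum.cong[OF refl])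
    fix I
    show "eval_design H rk (\<lambda>s. u (I s)) (\<lambda>s. v (I s)) (\<lambda>s. x (I s)) = (\<Sum>q1\<in>C1. \<Sum>q2\<in>C2. \<Sum>q3\<in>C3. ?F I q1 q2 q3)"
      unfolding eval_design_def e1[rule_format] e2[rule_format] e3[rule_format] sum3_prod
      by (intro sum.cong refl) (simp add: prod.distrib mult_ac)
  qed
  also have "\<dots> = (\<Sum>q1\<in>C1. \<Sum>I\<in>?PI. \<Sum>q2\<in>C2. \<Sum>q3\<in>C3. ?F I q1 q2 q3)"
    by (rule sum.swap)
  also have "\<dots> = (\<Sum>q1\<in>C1. \<Sum>q2\<in>C2. \<Sum>I\<in>?PI. \<Sum>q3\<in>C3. ?F I q1 q2 q3)"
    by (rule sum.cong[OF refl], rule sum.swap)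
  also have "\<dots> = (\<Sum>q1\<in>C1. \<Sum>q2\<in>C2. \<Sum>q3\<in>C3. \<Sum>I\<in>?PI. ?F I q1 q2 q3)"
    by (rule sum.cong[OF refl], rule sum.cong[OF refl], rule sum.swap)
  also have "\<dots> = (\<Sum>q1\<in>C1. \<Sum>q2\<in>C2. \<Sum>q3\<in>C3. c1 q1 * c2 q2 * c3 q3 *
            (\<Prod>s\<in>H. w (a1 q1 s) (a2 q2 s) (a3 q3 s)))"
  proof (intro sum.cong refl)
    fix q1 q2 q3 assume q: "q1 \<in> C1" "q2 \<in> C2" "q3 \<in> C3"
    have "(\<Sum>I\<in>?PI. ?F I q1 q2 q3) = c1 q1 * c2 q2 * c3 q3 *
        (\<Sum>I\<in>?PI. \<Prod>s\<in>H. u (I s) (a1 q1 s) * v (I s) (a2 q2 s) * x (I s) (a3 q3 s))"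
      by (simp add: sum_distrib_left)
    also have "(\<Sum>I\<in>?PI. \<Prod>s\<in>H. u (I s) (a1 q1 s) * v (I s) (a2 q2 s) * x (I s) (a3 q3 s))
       = (\<Prod>s\<in>H. \<Sum>l<r. u l (a1 q1 s) * v l (a2 q2 s) * x l (a3 q3 s))"
      by (rule prod_sum_PiE[symmetric]) (use fin in auto)
    also have "\<dots> = (\<Prod>s\<in>H. w (a1 q1 s) (a2 q2 s) (a3 q3 s))"
    proof (rule prod.cong[OF refl])
      fix s assume "s \<in> H"
      hence "a1 q1 s < n" "a2 q2 s < n" "a3 q3 s < n" using q b1 b2 b3 by auto
      thus "(\<Sum>l<r. u l (a1 q1 s) * v l (a2 q2 s) * x l (a3 q3 s)) = w (a1 q1 s) (a2 q2 s) (a3 q3 s)"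
        using dec unfolding is_decomp_def by simp
    qed
    finally show "(\<Sum>I\<in>?PI. ?F I q1 q2 q3) = c1 q1 * c2 q2 * c3 q3 * (\<Prod>s\<in>H. w (a1 q1 s) (a2 q2 s) (a3 q3 s))" .
  qed
  finally show ?thesis .
qed

lemma decomp_of_rank: "\<exists>u v x. is_decomp n w (tensor_rank n w) u v x"
proof -
  obtain r u v x where "is_decomp n w r u v x" using exists_decomp by blast
  hence "\<exists>r u v x. is_decomp n w r u v x" by blast
  thus ?thesis unfolding tensor_rank_def by (rule LeastI_ex)
qed

theorem proposition4p2:
  fixes H :: "point set" and rk :: "point \<Rightarrow> nat" and n d :: nat and w :: tensor3
  assumes "finite H"
    and "inj_on rk H"
    and "vdash_n n d (design_type H)"
    and "border_rank n w < chromatic_index H"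
  shows "fH n H rk w = 0"
proof -
  note fin = assms(1) and inj = assms(2) and vd = assms(3)
  have cn: "\<forall>e\<in>slices k H. card e \<le> n" if "k \<in> {1,2,3}" for k
    using slice_card_le[OF fin vd that] by blast
  have cn1: "\<forall>e\<in>slices 1 H. card e \<le> n" by (rule cn) simp
  have cn2: "\<forall>e\<in>slices 2 H. card e \<le> n" by (rule cn) simp
  have cn3: "\<forall>e\<in>slices 3 H. card e \<le> n" by (rule cn) simp
  obtain C1 :: "(point set \<Rightarrow> nat \<Rightarrow> nat) set" and c1 :: "(point set \<Rightarrow> nat \<Rightarrow> nat) \<Rightarrow> complex" and a1 where C1: "finite C1" "\<forall>q\<in>C1. \<forall>s\<in>H. a1 q s < n"
    "\<forall>J. (\<Prod>e\<in>slices 1 H. det_restr rk J e) = (\<Sum>q\<in>C1. c1 q * (\<Prod>s\<in>H. J s (a1 q s)))"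
    using prod_slices_expand[OF fin inj cn1] by blast
  obtain C2 :: "(point set \<Rightarrow> nat \<Rightarrow> nat) set" and c2 :: "(point set \<Rightarrow> nat \<Rightarrow> nat) \<Rightarrow> complex" and a2 where C2: "finite C2" "\<forall>q\<in>C2. \<forall>s\<in>H. a2 q s < n"
    "\<forall>J. (\<Prod>e\<in>slices 2 H. det_restr rk J e) = (\<Sum>q\<in>C2. c2 q * (\<Prod>s\<in>H. J s (a2 q s)))"
    using prod_slices_expand[OF fin inj cn2] by blast
  obtain C3 :: "(point set \<Rightarrow> nat \<Rightarrow> nat) set" and c3 :: "(point set \<Rightarrow> nat \<Rightarrow> nat) \<Rightarrow> complex" and a3 where C3: "finite C3" "\<forall>q\<in>C3. \<forall>s\<in>H. a3 q s < n"
    "\<forall>J. (\<Prod>e\<in>slices 3 H. det_restr rk J e) = (\<Sum>q\<in>C3. c3 q * (\<Prod>s\<in>H. J s (a3 q s)))"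
    using prod_slices_expand[OF fin inj cn3] by blast
  define P where "P w' = (\<Sum>q1\<in>C1. \<Sum>q2\<in>C2. \<Sum>q3\<in>C3. c1 q1 * c2 q2 * c3 q3 *
            (\<Prod>s\<in>H. w' (a1 q1 s) (a2 q2 s) (a3 q3 s)))" for w' :: tensor3
  have Pdec: "fH_decomp H rk r u v x = P w'" if "is_decomp n w' r u v x" for w' r u v x
    unfolding P_def by (rule fH_decomp_poly[OF fin C1(1) C2(1) C3(1) C1(2) C2(2) C3(2) C1(3) C2(3) C3(3) that])
  have fHP: "fH n H rk w = P w"
  proof -
    obtain r u v x where sx: "(SOME (r, u, v, x). is_decomp n w r u v x) = (r, u, v, x)"
      by (metis prod_cases4)
    have "is_decomp n w r u v x"
    proof -
      have "\<exists>t. (\<lambda>(r, u, v, x). is_decomp n w r u v x) t" using exists_decomp by blast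
      hence "(\<lambda>(r, u, v, x). is_decomp n w r u v x) (SOME (r, u, v, x). is_decomp n w r u v x)"
        by (rule someI_ex)
      thus ?thesis using sx by simp
    qed
    thus ?thesis unfolding fH_def sx using Pdec by simp
  qed
  have Pzero: "P w' = 0" if "tensor_rank n w' < chromatic_index H" for w'
  proof -
    obtain u v x where "is_decomp n w' (tensor_rank n w') u v x" using decomp_of_rank by blast
    hence "P w' = fH_decomp H rk (tensor_rank n w') u v x" using Pdec by simp
    also have "\<dots> = 0" by (rule fH_decomp_zero[OF fin inj that])
    finally show ?thesis .
  qed
  let ?Q = "\<lambda>r. \<exists>T :: nat \<Rightarrow> tensor3. (\<forall>m. tensor_rank n (T m) \<le> r) \<and>
      (\<forall>i<n. \<forall>j<n. \<forall>k<n. (\<lambda>m. T m i j k) \<longlonglongrightarrow> w i j k)"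
  have "?Q (tensor_rank n w)" by (rule exI[of _ "\<lambda>m. w"]) auto
  hence "?Q (border_rank n w)" unfolding border_rank_def by (rule LeastI)
  then obtain T :: "nat \<Rightarrow> tensor3" where T1: "\<forall>m. tensor_rank n (T m) \<le> border_rank n w"
    and T2: "\<forall>i<n. \<forall>j<n. \<forall>k<n. (\<lambda>m. T m i j k) \<longlonglongrightarrow> w i j k" by blast
  have z: "P (T m) = 0" for m using Pzero T1 assms(4) by (meson le_less_trans)
  have lim: "(\<lambda>m. P (T m)) \<longlonglongrightarrow> P w"
    unfolding P_def
  proof (intro tendsto_sum tendsto_mult tendsto_const tendsto_prod)
    fix q1 q2 q3 s assume "q1 \<in> C1" "q2 \<in> C2" "q3 \<in> C3" "s \<in> H"
    thus "(\<lambda>m. T m (a1 q1 s) (a2 q2 s) (a3 q3 s)) \<longlonglongrightarrow> w (a1 q1 s) (a2 q2 s) (a3 q3 s)"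
      using T2 C1(2) C2(2) C3(2) by blast
  qed
  have "P w = 0" using lim z by (simp add: LIMSEQ_const_iff)
  thus ?thesis using fHP by simp
qed

end
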